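(* Let $\mathcal X$ be a GKM variety with a combinatorial moment graph as described in the context. Suppose that for each $T$-fixed point $v\in\mathcal X^T$ there exists at least one Knutson–Tao class $p^v\in H^*_T(\mathcal X)$. Then the classes $\{p^v: v\in\mathcal X^T\}$ form a basis of $H^*_T(\mathcal X)$ as a module over $\mathbb{C}[t_1,\ldots,t_n]$.
   Context: Let $T=(\mathbb{C}^* )^n$ and let $\mathcal X$ be a complex projective algebraic variety with an algebraic $T$-action having finitely many fixed points and finitely many one-dimensional orbits, and which is equivariantly formal (a GKM variety). The closure of each one-dimensional orbit $O$ contains exactly two fixed points $N_O,S_O$, and $T$ acts on the tangent line at $N_O$ by a weight $\alpha$ (a linear form in $t_1,\ldots,t_n$) and at $S_O$ by $-\alpha$. The moment graph has vertex set $\mathcal X^T$ and an edge between two fixed points for each one-dimensional orbit whose closure contains both. It is directed with no directed circuits, and each directed edge $v\to w$ is labeled $\alpha_{vw}$, the weight at $v$ of the corresponding orbit. Assume that for each $v$ the labels on the edges directed out of $v$ are pairwise linearly independent. By the GKM theorem, $H^*_T(\mathcal X)$ is the ring of tuples $(p_w)_{w\in\mathcal X^T}$, $p_w\in\mathbb{C}[t_1,\ldots,t_n]$, with $p_{N_O}-p_{S_O}\in\langle t_O\rangle$ for every one-dimensional orbit $O$ of weight $t_O$. Write $u\succeq_D u'$ if there is a directed path (possibly of length $0$) from $u$ to $u'$. A Knutson–Tao class for $v\in\mathcal X^T$ is a class $(p^v_w)_w\in H^*_T(\mathcal X)$ such that: (1) $p^v_v=\prod_{v\to w}\alpha_{vw}$,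 the product over all edges directed out of $v$; (2) each nonzero $p^v_w$ is homogeneous of degree $\deg p^v_v$; (3) $p^v_w=0$ whenever $w\not\succ_D v$, i.e. whenever $w\neq v$ and there is no directed path from $w$ to $v$. *)

theory Defs
  imports Complex_Main "HOL-Library.Poly_Mapping"
begin

(* Polynomials in the variables t_i, i ranging over the finite type 'n
  (so n = CARD('n)), with complex coefficients: finitely supported maps from
  monomials (exponent vectors 'n =>0 nat) to coefficients. *)
type_synonym 'n cpoly = "('n \<Rightarrow>\<^sub>0 nat) \<Rightarrow>\<^sub>0 complex"

definition mdeg :: "('n::finite \<Rightarrow>\<^sub>0 nat) \<Rightarrow> nat" where
  "mdeg m = (\<Sum>i\<in>UNIV. Poly_Mapping.lookup m i)"

definition homogeneous :: "nat \<Rightarrow> 'n::finite cpoly \<Rightarrow> bool" where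
  "homogeneous d p \<longleftrightarrow> (\<forall>m\<in>Poly_Mapping.keys p. mdeg m = d)"

definition linear_form :: "'n::finite cpoly \<Rightarrow> bool" where
  "linear_form a \<longleftrightarrow> a \<noteq> 0 \<and> homogeneous 1 a"

definition scal :: "complex \<Rightarrow> 'n cpoly \<Rightarrow> 'n cpoly" where
  "scal c p = Poly_Mapping.map (\<lambda>x. c * x) p"

definition lin_indep2 :: "'n cpoly \<Rightarrow> 'n cpoly \<Rightarrow> bool" where
  "lin_indep2 a b \<longleftrightarrow> (\<forall>c d. scal c a + scal d b = 0 \<longrightarrow> c = 0 \<and> d = 0)"

(* Combinatorial moment graph: vertices = all elements of the finite type 'v
  (the fixed points), edges = elements of the finite type 'e (one-dimensional
  orbits), each directed src e -> tgt e and labelled alpha e (the weight at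
  src e; the weight at tgt e is - alpha e). *)
definition dir_rel :: "('e \<Rightarrow> 'v) \<Rightarrow> ('e \<Rightarrow> 'v) \<Rightarrow> ('v \<times> 'v) set" where
  "dir_rel src tgt = {(src e, tgt e) | e. True}"

definition moment_graph ::
  "('e::finite \<Rightarrow> 'v::finite) \<Rightarrow> ('e \<Rightarrow> 'v) \<Rightarrow> ('e \<Rightarrow> 'n::finite cpoly) \<Rightarrow> bool" where
  "moment_graph src tgt alpha \<longleftrightarrow>
     (\<forall>e. src e \<noteq> tgt e) \<and>
     (\<forall>e. linear_form (alpha e)) \<and>
     acyclic (dir_rel src tgt) \<and>
     (\<forall>e1 e2. e1 \<noteq> e2 \<and> src e1 = src e2 \<longrightarrow> lin_indep2 (alpha e1) (alpha e2))"

(* The GKM description of H_T^*(X). *)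
definition GKM_ring ::
  "('e::finite \<Rightarrow> 'v::finite) \<Rightarrow> ('e \<Rightarrow> 'v) \<Rightarrow> ('e \<Rightarrow> 'n::finite cpoly) \<Rightarrow> ('v \<Rightarrow> 'n cpoly) set" where
  "GKM_ring src tgt alpha = {p. \<forall>e. alpha e dvd (p (src e) - p (tgt e))}"

definition KT_class ::
  "('e::finite \<Rightarrow> 'v::finite) \<Rightarrow> ('e \<Rightarrow> 'v) \<Rightarrow> ('e \<Rightarrow> 'n::finite cpoly) \<Rightarrow> 'v \<Rightarrow> ('v \<Rightarrow> 'n cpoly) \<Rightarrow> bool" where
  "KT_class src tgt alpha v p \<longleftrightarrow>
     p \<in> GKM_ring src tgt alpha \<and>
     p v = (\<Prod>e\<in>{e. src e = v}. alpha e) \<and>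
     (\<exists>d. homogeneous d (p v) \<and> (\<forall>w. p w \<noteq> 0 \<longrightarrow> homogeneous d (p w))) \<and>
     (\<forall>w. w \<noteq> v \<and> (w, v) \<notin> (dir_rel src tgt)\<^sup>* \<longrightarrow> p w = 0)"

definition is_module_basis :: "('v::finite \<Rightarrow> ('v \<Rightarrow> 'n cpoly)) \<Rightarrow> ('v \<Rightarrow> 'n cpoly) set \<Rightarrow> bool" where
  "is_module_basis b M \<longleftrightarrow> (\<forall>v. b v \<in> M) \<and>
     (\<forall>q\<in>M. \<exists>!c::'v \<Rightarrow> 'n cpoly. q = (\<lambda>w. \<Sum>v\<in>UNIV. c v * b v w))"

end

theory Submission
  imports Defs
begin


definition Cst :: "complex \<Rightarrow> ('b \<Rightarrow>\<^sub>0 nat) \<Rightarrow>\<^sub>0 complex" where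
  "Cst c = Poly_Mapping.single 0 c"

definition Xv :: "'n \<Rightarrow> ('n \<Rightarrow>\<^sub>0 nat) \<Rightarrow>\<^sub>0 complex" where
  "Xv i = Poly_Mapping.single (Poly_Mapping.single i 1) 1"

definition mono :: "('n::finite \<Rightarrow> 'r::comm_ring_1) \<Rightarrow> ('n \<Rightarrow>\<^sub>0 nat) \<Rightarrow> 'r" where
  "mono s m = (\<Prod>j\<in>UNIV. s j ^ Poly_Mapping.lookup m j)"

definition subst :: "('n::finite \<Rightarrow> ('b \<Rightarrow>\<^sub>0 nat) \<Rightarrow>\<^sub>0 complex) \<Rightarrow> 'n cpoly \<Rightarrow> ('b \<Rightarrow>\<^sub>0 nat) \<Rightarrow>\<^sub>0 complex" where
  "subst s f = (\<Sum>m\<in>Poly_Mapping.keys f. Cst (Poly_Mapping.lookup f m) * mono s m)"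

lemma Cst_mult: "Cst (a * b) = Cst a * Cst b"
  by (simp add: Cst_def mult_single)
lemma Cst_add: "Cst (a + b) = Cst a + Cst b"
  by (simp add: Cst_def single_add)
lemma Cst_diff: "Cst (a - b) = Cst a - Cst b"
  by (simp add: Cst_def single_diff)
lemma Cst_uminus: "Cst (- a) = - Cst a"
  by (simp add: Cst_def single_uminus)
lemma Cst_1 [simp]: "Cst 1 = 1"
  by (simp add: Cst_def)
lemma Cst_0 [simp]: "Cst 0 = 0"
  by (simp add: Cst_def)
lemma Cst_eq_0 [simp]: "Cst a = 0 \<longleftrightarrow> a = 0"
  by (metis Cst_def lookup_single_eq single_zero)

lemma subst_superset:
  assumes "finite A" "Poly_Mapping.keys f \<subseteq> A"
  shows "subst s f = (\<Sum>m\<in>A. Cst (Poly_Mapping.lookup f m) * mono s m)"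
  unfolding subst_def
  by (rule sum.mono_neutral_left) (use assms in \<open>auto simp: in_keys_iff\<close>)

lemma subst_add: "subst s (f + g) = subst s f + subst s g"
proof -
  let ?A = "Poly_Mapping.keys f \<union> Poly_Mapping.keys g"
  have k: "Poly_Mapping.keys (f + g) \<subseteq> ?A" by (rule keys_add)
  show ?thesis
    by (simp add: subst_superset[of ?A f] subst_superset[of ?A g] subst_superset[OF _ k]
        lookup_add Cst_add distrib_right sum.distrib)
qed

lemma subst_zero [simp]: "subst s 0 = 0"
  by (simp add: subst_def)

lemma subst_diff: "subst s (f - g) = subst s f - subst s g"
  by (metis add_diff_cancel diff_add_cancel subst_add)

lemma subst_sum: "subst s (\<Sum>i\<in>I. F i) = (\<Sum>i\<in>I. subst s (F i))"
  by (induction I rule: infinite_finite_induct) (auto simp: subst_add)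

lemma subst_single: "subst s (Poly_Mapping.single m c) = Cst c * mono s m"
  by (cases "c = 0") (auto simp: subst_def)

lemma pm_expand: "f = (\<Sum>m\<in>Poly_Mapping.keys f. Poly_Mapping.single m (Poly_Mapping.lookup f m))"
proof (rule poly_mapping_eqI)
  fix k
  show "Poly_Mapping.lookup f k = Poly_Mapping.lookup (\<Sum>m\<in>Poly_Mapping.keys f. Poly_Mapping.single m (Poly_Mapping.lookup f m)) k"
    by (simp add: lookup_sum lookup_single when_def in_keys_iff)
qed

lemma pm_mult_expand:
  "f * g = (\<Sum>m\<in>Poly_Mapping.keys f. \<Sum>m'\<in>Poly_Mapping.keys g.
      Poly_Mapping.single (m + m') (Poly_Mapping.lookup f m * Poly_Mapping.lookup g m'))"
proof -
  have "f * g = (\<Sum>m\<in>Poly_Mapping.keys f. Poly_Mapping.single m (Poly_Mapping.lookup f m)) *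
     (\<Sum>m\<in>Poly_Mapping.keys g. Poly_Mapping.single m (Poly_Mapping.lookup g m))"
    using pm_expand[of f] pm_expand[of g] by simp
  then show ?thesis by (simp add: sum_product mult_single)
qed

lemma mono_add: "mono s (m + m') = mono s m * mono s m'"
  by (simp add: mono_def lookup_add power_add prod.distrib)

lemma mono_zero [simp]: "mono s 0 = 1"
  by (simp add: mono_def)

lemma subst_mult: "subst s (f * g) = subst s f * subst s g"
proof -
  have "subst s (f * g) = (\<Sum>m\<in>Poly_Mapping.keys f. \<Sum>m'\<in>Poly_Mapping.keys g.
      Cst (Poly_Mapping.lookup f m) * mono s m * (Cst (Poly_Mapping.lookup g m') * mono s m'))"
    by (subst pm_mult_expand) (simp add: subst_sum subst_single Cst_mult mono_add mult_ac)
  also have "\<dots> = subst s f * subst s g"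
    by (simp add: subst_def sum_product)
  finally show ?thesis .
qed

lemma subst_Cst [simp]: "subst s (Cst c) = Cst c"
  by (simp add: Cst_def subst_single)

lemma subst_one [simp]: "subst s 1 = 1"
  using subst_Cst[of s 1] by simp

lemma mono_single1: "mono s (Poly_Mapping.single j 1) = s j"
proof -
  have "mono s (Poly_Mapping.single j 1) = (\<Prod>k\<in>UNIV. if k = j then s j else 1)"
    unfolding mono_def by (rule prod.cong) (auto simp: lookup_single when_def)
  also have "\<dots> = s j" by simp
  finally show ?thesis .
qed

lemma subst_X [simp]: "subst s (Xv j) = s j"
  unfolding Xv_def subst_single mono_single1 by simp

lemma single_pow: "(Poly_Mapping.single (Poly_Mapping.single x 1) (1::complex)) ^ k
   = Poly_Mapping.single (Poly_Mapping.single x k) 1"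
  by (induction k) (auto simp: mult_single single_add[symmetric])

lemma prod_single:
  "(\<Prod>j\<in>A. Poly_Mapping.single (a j) (1::complex)) = Poly_Mapping.single (\<Sum>j\<in>A. a j) 1"
  by (induction A rule: infinite_finite_induct) (auto simp: mult_single)

lemma mono_var: "mono (\<lambda>j. Poly_Mapping.single (Poly_Mapping.single (\<phi> j) 1) (1::complex)) m
   = Poly_Mapping.single (\<Sum>j\<in>UNIV. Poly_Mapping.single (\<phi> j) (Poly_Mapping.lookup m j)) 1"
  unfolding mono_def single_pow prod_single by (rule refl)

lemma nat_pm_expand: "(\<Sum>j\<in>UNIV. Poly_Mapping.single j (Poly_Mapping.lookup m j)) = (m::'n::finite \<Rightarrow>\<^sub>0 nat)"
  by (rule poly_mapping_eqI) (simp add: lookup_sum lookup_single when_def)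

lemma mono_Xv: "mono Xv m = Poly_Mapping.single m 1"
  using mono_var[of "\<lambda>j. j" m] by (simp add: Xv_def[abs_def] nat_pm_expand)

lemma subst_id: "subst Xv f = f"
proof -
  have "subst Xv f = (\<Sum>m\<in>Poly_Mapping.keys f. Poly_Mapping.single m (Poly_Mapping.lookup f m))"
    unfolding subst_def by (simp add: mono_Xv Cst_def mult_single)
  then show ?thesis using pm_expand[of f] by simp
qed


lemma exists_inj_nat: "\<exists>\<iota>::'n::finite \<Rightarrow> nat. inj \<iota>"
  using finite_imp_inj_to_nat_seg[of "UNIV::'n set"] by auto

lemma subst_inj_embed:
  fixes \<iota> :: "'n::finite \<Rightarrow> nat" and f :: "'n cpoly"
  assumes inj: "inj \<iota>"
    and z: "subst (\<lambda>j. Poly_Mapping.single (Poly_Mapping.single (\<iota> j) 1) (1::complex)) f = 0"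
  shows "f = 0"
proof -
  define push where "push m = (\<Sum>j\<in>UNIV. Poly_Mapping.single (\<iota> j) (Poly_Mapping.lookup m j))"
    for m :: "'n \<Rightarrow>\<^sub>0 nat"
  have lp: "Poly_Mapping.lookup (push m) (\<iota> j) = Poly_Mapping.lookup m j" for m j
  proof -
    have "Poly_Mapping.lookup (push m) (\<iota> j) = (\<Sum>j'\<in>UNIV. if j' = j then Poly_Mapping.lookup m j' else 0)"
      unfolding push_def lookup_sum
      by (rule sum.cong) (auto simp: lookup_single when_def inj_eq[OF inj])
    then show ?thesis by simp
  qed
  have pinj: "push m = push m' \<Longrightarrow> m = m'" for m m'
    by (rule poly_mapping_eqI) (metis lp)
  have E: "subst (\<lambda>j. Poly_Mapping.single (Poly_Mapping.single (\<iota> j) 1) (1::complex)) f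
     = (\<Sum>m\<in>Poly_Mapping.keys f. Poly_Mapping.single (push m) (Poly_Mapping.lookup f m))"
    unfolding subst_def mono_var push_def by (simp add: Cst_def mult_single)
  show ?thesis
  proof (rule poly_mapping_eqI)
    fix m0
    have "Poly_Mapping.lookup f m0 = (\<Sum>m\<in>Poly_Mapping.keys f. if m = m0 then Poly_Mapping.lookup f m else 0)"
      by (simp add: in_keys_iff)
    also have "\<dots> = Poly_Mapping.lookup (\<Sum>m\<in>Poly_Mapping.keys f. Poly_Mapping.single (push m) (Poly_Mapping.lookup f m)) (push m0)"
      unfolding lookup_sum by (rule sum.cong) (auto simp: lookup_single when_def dest: pinj)
    also have "\<dots> = 0" using z E by simp
    finally show "Poly_Mapping.lookup f m0 = Poly_Mapping.lookup 0 m0" by simp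
  qed
qed

lemma pm_domain:
  fixes f g :: "'n::finite cpoly"
  assumes "f * g = 0" shows "f = 0 \<or> g = 0"
proof -
  obtain \<iota> :: "'n \<Rightarrow> nat" where inj: "inj \<iota>" using exists_inj_nat by blast
  let ?s = "\<lambda>j. Poly_Mapping.single (Poly_Mapping.single (\<iota> j) 1) (1::complex)"
  have "subst ?s f * subst ?s g = 0" using assms by (metis subst_mult subst_zero)
  then have "subst ?s f = 0 \<or> subst ?s g = 0" by simp
  then show ?thesis using subst_inj_embed[OF inj] by blast
qed

lemma pm_prod_nonzero:
  fixes F :: "'a \<Rightarrow> 'n::finite cpoly"
  shows "(\<forall>x\<in>A. F x \<noteq> 0) \<Longrightarrow> (\<Prod>x\<in>A. F x) \<noteq> 0"
  by (induction A rule: infinite_finite_induct) (auto dest: pm_domain)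


definition free :: "'n \<Rightarrow> 'n cpoly \<Rightarrow> bool" where
  "free i f \<longleftrightarrow> (\<forall>m\<in>Poly_Mapping.keys f. Poly_Mapping.lookup m i = 0)"

lemma scal_Cst: "scal c p = Cst c * p"
proof -
  have "(\<lambda>x. c * x) = (*) c" by (rule ext) simp
  then show ?thesis unfolding scal_def Cst_def using mult_map_scale_conv_mult[of c p] by simp
qed

lemma mdeg1:
  fixes m :: "'n::finite \<Rightarrow>\<^sub>0 nat"
  assumes "mdeg m = 1" "Poly_Mapping.lookup m i \<noteq> 0"
  shows "m = Poly_Mapping.single i 1"
proof -
  have s: "(\<Sum>j\<in>UNIV. Poly_Mapping.lookup m j) = 1" using assms(1) by (simp add: mdeg_def)
  have "(\<Sum>j\<in>UNIV. Poly_Mapping.lookup m j) = Poly_Mapping.lookup m i + (\<Sum>j\<in>UNIV - {i}. Poly_Mapping.lookup m j)"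
    by (simp add: sum.remove)
  with s have eq: "Poly_Mapping.lookup m i + (\<Sum>j\<in>UNIV - {i}. Poly_Mapping.lookup m j) = 1" by simp
  from eq assms(2) have mi: "Poly_Mapping.lookup m i = 1" by linarith
  from eq assms(2) have r: "(\<Sum>j\<in>UNIV - {i}. Poly_Mapping.lookup m j) = 0" by linarith
  from r have z: "\<forall>j\<in>UNIV - {i}. Poly_Mapping.lookup m j = 0" by simp
  show ?thesis
  proof (intro poly_mapping_eqI)
    fix j show "Poly_Mapping.lookup m j = Poly_Mapping.lookup (Poly_Mapping.single i 1) j"
      using z mi by (cases "j = i") (auto simp: lookup_single when_def)
  qed
qed

lemma Cst_Xv: "Cst a * Xv i = Poly_Mapping.single (Poly_Mapping.single i 1) a"
  by (simp add: Cst_def Xv_def mult_single)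

lemma lin_decomp:
  assumes "homogeneous 1 f"
  shows "free i (f - Cst (Poly_Mapping.lookup f (Poly_Mapping.single i 1)) * Xv i)"
  unfolding free_def
proof
  fix m assume m: "m \<in> Poly_Mapping.keys (f - Cst (Poly_Mapping.lookup f (Poly_Mapping.single i 1)) * Xv i)"
  then have ne: "m \<noteq> Poly_Mapping.single i 1" and mk: "m \<in> Poly_Mapping.keys f"
    by (auto simp: Cst_Xv in_keys_iff lookup_minus lookup_single when_def split: if_splits)
  have "mdeg m = 1" using assms mk by (simp add: homogeneous_def)
  then show "Poly_Mapping.lookup m i = 0" using mdeg1 ne by blast
qed

lemma lin_pivot:
  assumes "linear_form f"
  obtains i where "Poly_Mapping.lookup f (Poly_Mapping.single i 1) \<noteq> 0"
proof -
  from assms have "f \<noteq> 0" "homogeneous 1 f" by (auto simp: linear_form_def)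
  then obtain m where m: "m \<in> Poly_Mapping.keys f" "mdeg m = 1"
    by (metis all_not_in_conv homogeneous_def keys_eq_empty)
  then obtain j where "Poly_Mapping.lookup m j \<noteq> 0"
    by (metis (no_types, lifting) mdeg_def sum.neutral zero_neq_one)
  with m have "m = Poly_Mapping.single j 1" using mdeg1 by blast
  with m(1) show ?thesis using that by (auto simp: in_keys_iff)
qed

lemma subst_free:
  assumes "\<forall>j. j \<noteq> i \<longrightarrow> s j = Xv j" "free i f"
  shows "subst s f = f"
proof -
  have "subst s f = subst Xv f"
    unfolding subst_def
  proof (rule sum.cong[OF refl])
    fix m assume "m \<in> Poly_Mapping.keys f"
    then have "Poly_Mapping.lookup m i = 0" using assms(2) by (simp add: free_def)
    then have "mono s m = mono Xv m"
      unfolding mono_def by (intro prod.cong refl) (metis assms(1) power_0)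
    then show "Cst (Poly_Mapping.lookup f m) * mono s m = Cst (Poly_Mapping.lookup f m) * mono Xv m" by simp
  qed
  then show ?thesis by (simp add: subst_id)
qed

lemma subst_dvd:
  assumes "\<forall>j. j \<noteq> i \<longrightarrow> s j = Xv j"
  shows "(Xv i - s i) dvd (f - subst s f)"
proof -
  have "f - subst s f = (\<Sum>m\<in>Poly_Mapping.keys f. Cst (Poly_Mapping.lookup f m) * (mono Xv m - mono s m))"
    using subst_id[of f] unfolding subst_def by (simp add: sum_subtractf right_diff_distrib)
  also have "(Xv i - s i) dvd \<dots>"
  proof (rule dvd_sum)
    fix m
    let ?Q = "\<Prod>j\<in>UNIV - {i}. Xv j ^ Poly_Mapping.lookup m j"
    have q: "(\<Prod>j\<in>UNIV - {i}. s j ^ Poly_Mapping.lookup m j) = ?Q"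
      by (rule prod.cong) (use assms in auto)
    have "mono Xv m - mono s m = (Xv i ^ Poly_Mapping.lookup m i - s i ^ Poly_Mapping.lookup m i) * ?Q"
      unfolding mono_def prod.remove[OF finite_UNIV UNIV_I, of _ i] q by (simp add: algebra_simps)
    moreover have "(Xv i - s i) dvd (Xv i ^ Poly_Mapping.lookup m i - s i ^ Poly_Mapping.lookup m i)"
      by (simp add: power_diff_sumr2)
    ultimately show "(Xv i - s i) dvd Cst (Poly_Mapping.lookup f m) * (mono Xv m - mono s m)"
      by simp
  qed
  finally show ?thesis .
qed


lemma Cst_inv: "a \<noteq> 0 \<Longrightarrow> Cst a * Cst (- (1 / a)) = - 1"
  by (simp only: Cst_mult[symmetric]) (simp add: Cst_uminus)

lemma lin_kill:
  fixes \<alpha> \<beta> :: "'n::finite cpoly"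
  assumes a: "a \<noteq> 0" and fb: "free i \<beta>" and al: "\<alpha> = Cst a * Xv i + \<beta>"
    and s: "s = (\<lambda>j. if j = i then Cst (- (1 / a)) * \<beta> else Xv j)"
  shows "\<alpha> dvd f \<longleftrightarrow> subst s f = 0"
proof -
  have sj: "\<forall>j. j \<noteq> i \<longrightarrow> s j = Xv j" using s by simp
  have sb: "subst s \<beta> = \<beta>" using subst_free[OF sj fb] .
  have "subst s \<alpha> = Cst a * (Cst (- (1 / a)) * \<beta>) + \<beta>"
    using sb by (simp add: al subst_add subst_mult s)
  also have "\<dots> = 0" by (simp add: Cst_inv[OF a] flip: mult.assoc)
  finally have s0: "subst s \<alpha> = 0" .
  have ai: "\<alpha> = Cst a * (Xv i - s i)"
  proof -
    have "Cst a * (Xv i - s i) = Cst a * Xv i - Cst a * Cst (- (1 / a)) * \<beta>"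
      by (simp add: s algebra_simps)
    also have "\<dots> = \<alpha>" using al by (simp add: Cst_inv[OF a])
    finally show ?thesis by simp
  qed
  have "Xv i - s i = Cst (1 / a) * \<alpha>"
    using a by (simp add: ai mult.assoc[symmetric] flip: Cst_mult)
  then have d: "\<alpha> dvd Xv i - s i" by simp
  show ?thesis
  proof
    assume "\<alpha> dvd f"
    then obtain h where "f = \<alpha> * h" by (auto elim: dvdE)
    then show "subst s f = 0" by (simp add: subst_mult s0)
  next
    assume "subst s f = 0"
    then have "(Xv i - s i) dvd f" using subst_dvd[OF sj, of f] by simp
    then show "\<alpha> dvd f" using d dvd_trans by blast
  qed
qed

lemma lin_setup:
  fixes \<alpha> :: "'n::finite cpoly"
  assumes "linear_form \<alpha>"
  obtains i a \<beta> where "a \<noteq> 0" "free i \<beta>" "\<alpha> = Cst a * Xv i + \<beta>"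
proof -
  obtain i where i: "Poly_Mapping.lookup \<alpha> (Poly_Mapping.single i 1) \<noteq> 0"
    using lin_pivot[OF assms] by blast
  have "free i (\<alpha> - Cst (Poly_Mapping.lookup \<alpha> (Poly_Mapping.single i 1)) * Xv i)"
    using assms lin_decomp by (auto simp: linear_form_def)
  with i show ?thesis using that by fastforce
qed

lemma lin_prime:
  fixes \<alpha> :: "'n::finite cpoly"
  assumes "linear_form \<alpha>" "\<alpha> dvd f * g"
  shows "\<alpha> dvd f \<or> \<alpha> dvd g"
proof -
  obtain i a \<beta> where h: "a \<noteq> 0" "free i \<beta>" "\<alpha> = Cst a * Xv i + \<beta>"
    using lin_setup[OF assms(1)] by blast
  define s where "s = (\<lambda>j. if j = i then Cst (- (1 / a)) * \<beta> else Xv j)"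
  note k = lin_kill[OF h s_def]
  from assms(2) k have "subst s f * subst s g = 0" by (simp add: subst_mult)
  then show ?thesis using k pm_domain by blast
qed

lemma lin_not_unit:
  fixes \<alpha> :: "'n::finite cpoly"
  assumes "linear_form \<alpha>"
  shows "\<not> \<alpha> dvd 1"
proof -
  obtain i a \<beta> where h: "a \<noteq> 0" "free i \<beta>" "\<alpha> = Cst a * Xv i + \<beta>"
    using lin_setup[OF assms(1)] by blast
  define s where "s = (\<lambda>j. if j = i then Cst (- (1 / a)) * \<beta> else Xv j)"
  note k = lin_kill[OF h s_def]
  show ?thesis using k by simp
qed

lemma lin_indep_not_dvd:
  fixes \<alpha> \<alpha>' :: "'n::finite cpoly"
  assumes "linear_form \<alpha>" "linear_form \<alpha>'" "lin_indep2 \<alpha>' \<alpha>"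
  shows "\<not> \<alpha> dvd \<alpha>'"
proof
  assume dv: "\<alpha> dvd \<alpha>'"
  obtain i a \<beta> where h: "a \<noteq> 0" "free i \<beta>" "\<alpha> = Cst a * Xv i + \<beta>"
    using lin_setup[OF assms(1)] by blast
  define s where "s = (\<lambda>j. if j = i then Cst (- (1 / a)) * \<beta> else Xv j)"
  note k = lin_kill[OF h s_def]
  have sj: "\<forall>j. j \<noteq> i \<longrightarrow> s j = Xv j" using s_def by simp
  define b where "b = Poly_Mapping.lookup \<alpha>' (Poly_Mapping.single i 1)"
  define \<gamma> where "\<gamma> = \<alpha>' - Cst b * Xv i"
  have fg: "free i \<gamma>" unfolding \<gamma>_def b_def using assms(2) lin_decomp by (auto simp: linear_form_def)
  have a': "\<alpha>' = Cst b * Xv i + \<gamma>" by (simp add: \<gamma>_def)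
  have "subst s \<alpha>' = Cst b * (Cst (- (1 / a)) * \<beta>) + \<gamma>"
    using subst_free[OF sj fg] by (simp add: a' subst_add subst_mult s_def)
  with dv k have z: "Cst b * (Cst (- (1 / a)) * \<beta>) + \<gamma> = 0" by simp
  have cc: "Cst b * Cst (- (1 / a)) = (- Cst (b / a) :: 'n cpoly)" by (simp flip: Cst_mult Cst_uminus)
  have ca: "Cst (b / a) * Cst a = (Cst b :: 'n cpoly)" using h(1) by (simp flip: Cst_mult)
  have "scal 1 \<alpha>' + scal (- (b / a)) \<alpha> = \<alpha>' - Cst (b / a) * \<alpha>"
    by (simp add: scal_Cst Cst_uminus)
  also have "\<dots> = Cst b * Xv i + \<gamma> - Cst (b / a) * Cst a * Xv i - Cst (b / a) * \<beta>"
    by (simp add: a' h(3) algebra_simps)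
  also have "\<dots> = \<gamma> - Cst (b / a) * \<beta>" using ca by simp
  also have "\<dots> = Cst b * (Cst (- (1 / a)) * \<beta>) + \<gamma>" using cc by (simp add: mult.assoc[symmetric])
  also have "\<dots> = 0" using z .
  finally have "scal 1 \<alpha>' + scal (- (b / a)) \<alpha> = 0" .
  with assms(3) have "(1::complex) = 0" unfolding lin_indep2_def by blast
  then show False by simp
qed


lemma lin_dvd_prod:
  fixes F :: "'a \<Rightarrow> 'n::finite cpoly"
  assumes "linear_form \<alpha>" "finite A"
  shows "\<alpha> dvd (\<Prod>x\<in>A. F x) \<Longrightarrow> \<exists>x\<in>A. \<alpha> dvd F x"
  using assms(2)
proof (induction A rule: finite_induct)
  case empty
  then show ?case using lin_not_unit[OF assms(1)] by simp
next
  case (insert x A)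
  then have "\<alpha> dvd F x * (\<Prod>x\<in>A. F x)" by simp
  then show ?case using lin_prime[OF assms(1)] insert by blast
qed

lemma prod_lin_dvd:
  fixes F :: "'a \<Rightarrow> 'n::finite cpoly"
  assumes "finite A" "\<forall>x\<in>A. linear_form (F x)"
    "\<forall>x\<in>A. \<forall>y\<in>A. x \<noteq> y \<longrightarrow> lin_indep2 (F x) (F y)"
    "\<forall>x\<in>A. F x dvd q"
  shows "(\<Prod>x\<in>A. F x) dvd q"
  using assms
proof (induction A rule: finite_induct)
  case empty
  then show ?case by simp
next
  case (insert x A)
  then have "(\<Prod>x\<in>A. F x) dvd q" by simp
  then obtain r where r: "q = (\<Prod>x\<in>A. F x) * r" by (auto elim: dvdE)
  have lx: "linear_form (F x)" using insert by simp
  have "F x dvd (\<Prod>x\<in>A. F x) * r" using insert r by simp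
  then have "F x dvd (\<Prod>x\<in>A. F x) \<or> F x dvd r" using lin_prime[OF lx] by blast
  moreover have "\<not> F x dvd (\<Prod>x\<in>A. F x)"
  proof
    assume "F x dvd (\<Prod>x\<in>A. F x)"
    then obtain y where y: "y \<in> A" "F x dvd F y" using lin_dvd_prod[OF lx insert(1)] by blast
    have "x \<noteq> y" using y insert by auto
    then have "\<not> F x dvd F y" using insert y lin_indep_not_dvd[OF lx, of "F y"] by auto
    then show False using y by simp
  qed
  ultimately obtain r' where "r = F x * r'" by (auto elim: dvdE)
  with r insert show ?case by (simp add: mult_ac)
qed

theorem mainTheorem2:
  fixes src tgt :: "'e::finite \<Rightarrow> 'v::finite"
    and alpha :: "'e \<Rightarrow> 'n::finite cpoly"
  assumes "moment_graph src tgt alpha"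
    and "\<forall>v. \<exists>p. KT_class src tgt alpha v p"
  shows "\<forall>P :: 'v \<Rightarrow> ('v \<Rightarrow> 'n cpoly). (\<forall>v. KT_class src tgt alpha v (P v)) \<longrightarrow>
           is_module_basis P (GKM_ring src tgt alpha)"
proof (intro allI impI)
  fix P :: "'v \<Rightarrow> ('v \<Rightarrow> 'n cpoly)"
  assume KT: "\<forall>v. KT_class src tgt alpha v (P v)"
  define R where "R = dir_rel src tgt"
  define G where "G = GKM_ring src tgt alpha"
  have mg: "\<forall>e. src e \<noteq> tgt e" "\<forall>e. linear_form (alpha e)" "acyclic R"
    "\<forall>e1 e2. e1 \<noteq> e2 \<and> src e1 = src e2 \<longrightarrow> lin_indep2 (alpha e1) (alpha e2)"
    using assms(1) by (auto simp: moment_graph_def R_def)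
  have finR: "finite R" by (rule finite_subset[of _ UNIV]) auto
  have wfR: "wf (R\<inverse>)" using finite_acyclic_wf_converse[OF finR mg(3)] .
  have edge: "(src e, tgt e) \<in> R" for e by (auto simp: R_def dir_rel_def)
  have PG: "P v \<in> G" for v using KT by (simp add: KT_class_def G_def)
  have Pdiag: "P v v = (\<Prod>e\<in>{e. src e = v}. alpha e)" for v using KT by (simp add: KT_class_def)
  have Pz: "w \<noteq> v \<Longrightarrow> (w, v) \<notin> R\<^sup>* \<Longrightarrow> P v w = 0" for v w
    using KT by (simp add: KT_class_def R_def)
  have Pnz: "P v v \<noteq> 0" for v
    unfolding Pdiag by (rule pm_prod_nonzero) (use mg(2) in \<open>auto simp: linear_form_def\<close>)
  have Gdvd: "q \<in> G \<Longrightarrow> alpha e dvd q (src e) - q (tgt e)" for q e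
    by (simp add: G_def GKM_ring_def)
  have span: "\<And>U q. card U = n \<Longrightarrow> (\<forall>u\<in>U. \<forall>w. (w, u) \<in> R\<^sup>* \<longrightarrow> w \<in> U) \<Longrightarrow> q \<in> G \<Longrightarrow>
      (\<forall>w. w \<notin> U \<longrightarrow> q w = 0) \<Longrightarrow> \<exists>c. q = (\<lambda>w. \<Sum>v\<in>UNIV. c v * P v w)" for n
  proof (induction n)
    case 0
    then have "U = {}" by simp
    with 0 have "q = (\<lambda>w. \<Sum>v\<in>UNIV. 0 * P v w)" by auto
    then show ?case by (intro exI[of _ "\<lambda>_. 0"]) simp
  next
    case (Suc n U q)
    then have "U \<noteq> {}" by auto
    then obtain u0 where "u0 \<in> U" by blast
    then obtain w where wU: "w \<in> U" and wmin: "\<And>y. (y, w) \<in> R\<inverse> \<Longrightarrow> y \<notin> U"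
      using wfE_min[OF wfR] by metis
    have wmin': "(w, y) \<in> R \<Longrightarrow> y \<notin> U" for y using wmin by auto
    define U' where "U' = U - {w}"
    have cU': "card U' = n" using Suc.prems(1) wU by (simp add: U'_def)
    have upU': "\<forall>u\<in>U'. \<forall>w'. (w', u) \<in> R\<^sup>* \<longrightarrow> w' \<in> U'"
    proof (intro ballI allI impI)
      fix u w' assume u: "u \<in> U'" and p: "(w', u) \<in> R\<^sup>*"
      have w'U: "w' \<in> U" using Suc.prems(2) u p by (auto simp: U'_def)
      show "w' \<in> U'"
      proof (rule ccontr)
        assume "w' \<notin> U'"
        then have ww: "w' = w" using w'U by (simp add: U'_def)
        have "u \<noteq> w" using u by (simp add: U'_def)
        then obtain y where y: "(w, y) \<in> R" "(y, u) \<in> R\<^sup>*"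
          using p ww by (metis converse_rtranclE)
        have "y \<in> U" using Suc.prems(2) u y(2) by (auto simp: U'_def)
        then show False using wmin' y(1) by blast
      qed
    qed
    have qt: "src e = w \<Longrightarrow> q (tgt e) = 0" for e
      using Suc.prems(4) wmin' edge[of e] by auto
    have "\<forall>e\<in>{e. src e = w}. alpha e dvd q w"
    proof
      fix e assume "e \<in> {e. src e = w}"
      then have "src e = w" by simp
      then show "alpha e dvd q w" using Gdvd[OF Suc.prems(3), of e] qt[of e] by simp
    qed
    then have "P w w dvd q w" unfolding Pdiag
      by (intro prod_lin_dvd) (use mg(2,4) in auto)
    then obtain k where k: "q w = P w w * k" by (auto elim: dvdE)
    define q' where "q' = (\<lambda>u. q u - k * P w u)"
    have q'G: "q' \<in> G"
      unfolding G_def GKM_ring_def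
    proof (intro CollectI allI)
      fix e
      have "q' (src e) - q' (tgt e) = (q (src e) - q (tgt e)) - k * (P w (src e) - P w (tgt e))"
        by (simp add: q'_def algebra_simps)
      moreover have "alpha e dvd q (src e) - q (tgt e)" using Gdvd[OF Suc.prems(3)] .
      moreover have "alpha e dvd P w (src e) - P w (tgt e)" using Gdvd[OF PG] .
      ultimately show "alpha e dvd q' (src e) - q' (tgt e)" by simp
    qed
    have q'z: "\<forall>u. u \<notin> U' \<longrightarrow> q' u = 0"
    proof (intro allI impI)
      fix u assume u: "u \<notin> U'"
      show "q' u = 0"
      proof (cases "u = w")
        case True
        then show ?thesis by (simp add: q'_def k mult.commute)
      next
        case False
        then have uU: "u \<notin> U" using u by (simp add: U'_def)
        then have "(u, w) \<notin> R\<^sup>*" using Suc.prems(2) wU by blast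
        then have "P w u = 0" using Pz False by blast
        then show ?thesis using uU Suc.prems(4) by (simp add: q'_def)
      qed
    qed
    obtain c' where c': "q' = (\<lambda>u. \<Sum>v\<in>UNIV. c' v * P v u)"
      using Suc.IH[OF cU' upU' q'G q'z] by blast
    define c where "c = (\<lambda>v. c' v + (if v = w then k else 0))"
    have "q = (\<lambda>u. \<Sum>v\<in>UNIV. c v * P v u)"
    proof
      fix u
      have "q u = q' u + k * P w u" by (simp add: q'_def)
      also have "\<dots> = (\<Sum>v\<in>UNIV. c' v * P v u) + (\<Sum>v\<in>UNIV. if v = w then k * P v u else 0)"
        by (simp add: c')
      also have "\<dots> = (\<Sum>v\<in>UNIV. c' v * P v u + (if v = w then k * P v u else 0))"
        by (simp add: sum.distrib)
      also have "\<dots> = (\<Sum>v\<in>UNIV. c v * P v u)"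
        by (rule sum.cong) (auto simp: c_def distrib_right)
      finally show "q u = (\<Sum>v\<in>UNIV. c v * P v u)" .
    qed
    then show ?case by blast
  qed
  have wfT: "wf ((R\<^sup>+)\<inverse>)" using wf_trancl[OF wfR] by (simp add: trancl_converse)
  have uniq: "c = d" if eq: "(\<lambda>w. \<Sum>v\<in>UNIV. c v * P v w) = (\<lambda>w. \<Sum>v\<in>UNIV. d v * P v w)"
    for c d :: "'v \<Rightarrow> 'n cpoly"
  proof (rule ccontr)
    define e where "e v = c v - d v" for v
    have e0: "(\<Sum>v\<in>UNIV. e v * P v w) = 0" for w
    proof -
      have "(\<Sum>v\<in>UNIV. c v * P v w) = (\<Sum>v\<in>UNIV. d v * P v w)" using eq by meson
      then show ?thesis by (simp add: e_def left_diff_distrib sum_subtractf)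
    qed
    assume "c \<noteq> d"
    then obtain v0 where "e v0 \<noteq> 0" by (auto simp: e_def fun_eq_iff)
    then have "v0 \<in> {v. e v \<noteq> 0}" by simp
    then obtain z where zZ: "z \<in> {v. e v \<noteq> 0}" and zmin: "\<And>y. (y, z) \<in> (R\<^sup>+)\<inverse> \<Longrightarrow> y \<notin> {v. e v \<noteq> 0}"
      using wfE_min[OF wfT] by metis
    have other: "e v * P v z = 0" if "v \<noteq> z" for v
    proof (cases "(z, v) \<in> R\<^sup>*")
      case True
      then have "(z, v) \<in> R\<^sup>+" using that by (simp add: rtrancl_eq_or_trancl)
      then have "e v = 0" using zmin by auto
      then show ?thesis by simp
    next
      case False
      then show ?thesis using Pz that by auto
    qed
    have "(\<Sum>v\<in>UNIV. e v * P v z) = e z * P z z"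
      using other by (subst sum.remove[of UNIV z]) (auto intro: sum.neutral)
    then have "e z * P z z = 0" using e0 by simp
    then show False using pm_domain Pnz zZ by blast
  qed
  show "is_module_basis P G"
    unfolding is_module_basis_def
  proof (intro conjI allI ballI)
    fix v show "P v \<in> G" by (rule PG)
  next
    fix q assume qG: "q \<in> G"
    have "\<exists>c. q = (\<lambda>w. \<Sum>v\<in>UNIV. c v * P v w)"
    proof -
      have u1: "\<forall>u\<in>(UNIV::'v set). \<forall>w. (w, u) \<in> R\<^sup>* \<longrightarrow> w \<in> UNIV" by simp
      have u2: "\<forall>w. w \<notin> (UNIV::'v set) \<longrightarrow> q w = 0" by simp
      show ?thesis by (rule span[OF refl u1 qG u2])
    qed
    then obtain c where c: "q = (\<lambda>w. \<Sum>v\<in>UNIV. c v * P v w)" by blast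
    show "\<exists>!c. q = (\<lambda>w. \<Sum>v\<in>UNIV. c v * P v w)"
    proof (rule ex1I[of _ c])
      show "q = (\<lambda>w. \<Sum>v\<in>UNIV. c v * P v w)" by (rule c)
    next
      fix d assume "q = (\<lambda>w. \<Sum>v\<in>UNIV. d v * P v w)"
      with c show "d = c" using uniq[of d c] by simp
    qed
  qed
qed

end
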